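(* Let $\Gamma$ be a flat Type $\mathcal A$ connection which is strongly linearly projectively equivalent to $\Gamma_i^0$ for some $0\le i\le 5$ (i.e. $\Gamma={}^L\Gamma_i^0$ for some real linear function $L$). Then one of the following holds: (1) $\Gamma=\Gamma_i^0$; (2) $i=1$, $\mathcal Q(\Gamma)=\mathrm{Span}\{e^{-x^1},\mathbb 1,x^2\}$, and $T(x^1,x^2)=(x^2,-x^1)$ intertwines $\Gamma$ and $\Gamma_3^0$; (3) $i=2$, $\mathcal Q(\Gamma)=\mathrm{Span}\{e^{x^1},\mathbb 1,e^{x^2+x^1}\}$, and $T(x^1,x^2)=(-x^1,x^1+x^2)$ intertwines $\Gamma$ and $\Gamma_2^0$; (4) $i=2$, $\mathcal Q(\Gamma)=\mathrm{Span}\{e^{-x^2},e^{-x^1-x^2},\mathbb 1\}$, and $T(x^1,x^2)=(x^2,-x^1-x^2)$ intertwines $\Gamma$ and $\Gamma_2^0$; (5) $i=3$, $\mathcal Q(\Gamma)=\mathrm{Span}\{e^{-x^2},x^1e^{-x^2},\mathbb 1\}$, and $T(x^1,x^2)=(-x^2,x^1)$ intertwines $\Gamma$ and $\Gamma_1^0$.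
   Context: A torsion-free connection has Christoffel symbols $\nabla_{\partial_{x^i}}\partial_{x^j}=\Gamma_{ij}^k\partial_{x^k}$; curvature $R(X,Y)Z=\nabla_X\nabla_YZ-\nabla_Y\nabla_XZ-\nabla_{[X,Y]}Z$, Ricci tensor $\rho(Y,Z)=\mathrm{Tr}(X\mapsto R(X,Y)Z)$, $\rho_s$ its symmetrization. Hessian $\mathcal H_\nabla f=(\partial_{x^i}\partial_{x^j}f-\Gamma_{ij}^k\partial_{x^k}f)dx^i\otimes dx^j$; on a surface $\mathcal Q(\Gamma)=\{f\in C^\infty(\mathbb R^2):\mathcal H_\nabla f+f\rho_s=0\}$. $\mathbb 1$ denotes the constant function $1$. For real constants, $\Gamma(a,b,c,d,e,f)$ denotes the connection on $\mathbb R^2$ with constant Christoffel symbols $\Gamma_{11}^1=a$, $\Gamma_{11}^2=b$, $\Gamma_{12}^1=\Gamma_{21}^1=c$, $\Gamma_{12}^2=\Gamma_{21}^2=d$, $\Gamma_{22}^1=e$, $\Gamma_{22}^2=f$ (Type $\mathcal A$ connections). For $g$ smooth, ${}^g\nabla_XY:=\nabla_XY+X(g)Y+Y(g)X$; for a linear function $L=a_1x^1+a_2x^2$, ${}^L\Gamma(a,b,c,d,e,f)=\Gamma(a+2a_1,b,c+a_2,d+a_1,e,f+2a_2)$; two Type $\mathcal A$ connections $\nabla,\tilde\nabla$ are strongly linearly projectively equivalent if $\tilde\nabla={}^L\nabla$ for some such $L$. "$T$ intertwines $\Gamma$ and $\Gamma'$" means $T^*\Gamma'=\Gamma$. The flat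 connections: $\Gamma_0^0=\Gamma(0,0,0,0,0,0)$, $\Gamma_1^0=\Gamma(1,0,0,1,0,0)$, $\Gamma_2^0=\Gamma(-1,0,0,0,0,1)$, $\Gamma_3^0=\Gamma(0,0,0,0,0,1)$, $\Gamma_4^0=\Gamma(0,0,0,0,1,0)$, $\Gamma_5^0=\Gamma(1,0,0,1,-1,0)$. *)

theory Defs
  imports "HOL-Analysis.Analysis"
begin

text \<open>A Type A connection on R^2 is represented by its (constant) Christoffel symbols
  C i j k = Gamma_ij^k, indices i j k in {1,2}; all values outside {1,2} are 0.
  Points of R^2 are pairs (x1, x2) :: real * real.\<close>

type_synonym conn = "nat \<Rightarrow> nat \<Rightarrow> nat \<Rightarrow> real"

definition idx :: "nat set" where "idx = {1, 2}"

definition GammaA :: "real \<Rightarrow> real \<Rightarrow> real \<Rightarrow> real \<Rightarrow> real \<Rightarrow> real \<Rightarrow> conn" where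
  "GammaA a b c d e f i j k =
     (if (i, j, k) = (1, 1, 1) then a
      else if (i, j, k) = (1, 1, 2) then b
      else if (i, j, k) = (1, 2, 1) \<or> (i, j, k) = (2, 1, 1) then c
      else if (i, j, k) = (1, 2, 2) \<or> (i, j, k) = (2, 1, 2) then d
      else if (i, j, k) = (2, 2, 1) then e
      else if (i, j, k) = (2, 2, 2) then f
      else 0)"

definition Gamma0 :: "nat \<Rightarrow> conn" where
  "Gamma0 i =
     (if i = 0 then GammaA 0 0 0 0 0 0
      else if i = 1 then GammaA 1 0 0 1 0 0
      else if i = 2 then GammaA (-1) 0 0 0 0 1
      else if i = 3 then GammaA 0 0 0 0 0 1
      else if i = 4 then GammaA 0 0 0 0 1 0
      else GammaA 1 0 0 1 (-1) 0)"

text \<open>Curvature R(d_i,d_j)d_k = R i j k l d_l for constant Christoffel symbols.\<close>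
definition curv :: "conn \<Rightarrow> nat \<Rightarrow> nat \<Rightarrow> nat \<Rightarrow> nat \<Rightarrow> real" where
  "curv G i j k l = (\<Sum>m\<in>idx. G j k m * G i m l - G i k m * G j m l)"

definition flat :: "conn \<Rightarrow> bool" where
  "flat G \<longleftrightarrow> (\<forall>i\<in>idx. \<forall>j\<in>idx. \<forall>k\<in>idx. \<forall>l\<in>idx. curv G i j k l = 0)"

definition ricci :: "conn \<Rightarrow> nat \<Rightarrow> nat \<Rightarrow> real" where
  "ricci G j k = (\<Sum>i\<in>idx. curv G i j k i)"

definition ricci_s :: "conn \<Rightarrow> nat \<Rightarrow> nat \<Rightarrow> real" where
  "ricci_s G j k = (ricci G j k + ricci G k j) / 2"

text \<open>Linear projective modification by L = a1 x^1 + a2 x^2: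
  (^L nabla)_X Y = nabla_X Y + X(L) Y + Y(L) X.\<close>
definition kdelta :: "nat \<Rightarrow> nat \<Rightarrow> real" where
  "kdelta j k = (if j = k \<and> j \<in> idx then 1 else 0)"

definition lincoef :: "real \<Rightarrow> real \<Rightarrow> nat \<Rightarrow> real" where
  "lincoef a1 a2 i = (if i = 1 then a1 else if i = 2 then a2 else 0)"

definition Lmod :: "real \<Rightarrow> real \<Rightarrow> conn \<Rightarrow> conn" where
  "Lmod a1 a2 G i j k = G i j k + lincoef a1 a2 i * kdelta j k + lincoef a1 a2 j * kdelta i k"

definition evec :: "nat \<Rightarrow> real \<times> real" where
  "evec i = (if i = 1 then (1, 0) else if i = 2 then (0, 1) else (0, 0))"

definition pd :: "nat \<Rightarrow> (real \<times> real \<Rightarrow> real) \<Rightarrow> (real \<times> real \<Rightarrow> real)" where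
  "pd i f = (\<lambda>x. frechet_derivative f (at x) (evec i))"

definition iter_pd :: "nat list \<Rightarrow> (real \<times> real \<Rightarrow> real) \<Rightarrow> (real \<times> real \<Rightarrow> real)" where
  "iter_pd is f = foldr pd is f"

definition smooth2 :: "(real \<times> real \<Rightarrow> real) \<Rightarrow> bool" where
  "smooth2 f \<longleftrightarrow> (\<forall>is. set is \<subseteq> idx \<longrightarrow> iter_pd is f differentiable_on UNIV)"

text \<open>Q(Gamma) = { f smooth : Hess f + f rho_s = 0 }.\<close>
definition Qsp :: "conn \<Rightarrow> (real \<times> real \<Rightarrow> real) set" where
  "Qsp G = {f. smooth2 f \<and>
     (\<forall>x. \<forall>i\<in>idx. \<forall>j\<in>idx.
        pd i (pd j f) x - (\<Sum>k\<in>idx. G i j k * pd k f x) + f x * ricci_s G i j = 0)}"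

definition span3 :: "(real \<times> real \<Rightarrow> real) \<Rightarrow> (real \<times> real \<Rightarrow> real) \<Rightarrow> (real \<times> real \<Rightarrow> real)
    \<Rightarrow> (real \<times> real \<Rightarrow> real) set" where
  "span3 f g h = {u. \<exists>a b c. u = (\<lambda>x. a * f x + b * g x + c * h x)}"

text \<open>T intertwines G and G' (T^* G' = G), for a linear isomorphism T of R^2 with
  matrix A (T x = A x, A a i = entry in row a, column i).  For constant
  coordinate frames the condition T_*(nabla_X Y) = nabla'_{T_*X} T_*Y reads
  sum_k G_ij^k A^c_k = sum_{a,b} A^a_i A^b_j G'_ab^c.\<close>
definition intertwines :: "(real \<times> real \<Rightarrow> real \<times> real) \<Rightarrow> conn \<Rightarrow> conn \<Rightarrow> bool" where
  "intertwines T G G' \<longleftrightarrow>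
     (\<exists>A :: nat \<Rightarrow> nat \<Rightarrow> real.
        A 1 1 * A 2 2 - A 1 2 * A 2 1 \<noteq> 0 \<and>
        (\<forall>x1 x2. T (x1, x2) = (A 1 1 * x1 + A 1 2 * x2, A 2 1 * x1 + A 2 2 * x2)) \<and>
        (\<forall>i\<in>idx. \<forall>j\<in>idx. \<forall>c\<in>idx.
           (\<Sum>k\<in>idx. G i j k * A c k) = (\<Sum>a\<in>idx. \<Sum>b\<in>idx. A a i * A b j * G' a b c)))"

end

theory Submission imports Defs begin

lemma pd_eq: "(u has_derivative D) (at x) \<Longrightarrow> pd i u x = D (evec i)"
  unfolding pd_def using frechet_derivative_at by metis

lemma dexp[simp]: "u differentiable (at x) \<Longrightarrow> (\<lambda>y. exp (u y :: real)) differentiable (at x)"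
  unfolding differentiable_def using has_derivative_exp by blast

lemma dfst[simp]: "(\<lambda>y::real\<times>real. fst y) differentiable F"
  unfolding differentiable_def using has_derivative_fst[OF has_derivative_ident] by blast
lemma dsnd[simp]: "(\<lambda>y::real\<times>real. snd y) differentiable F"
  unfolding differentiable_def using has_derivative_snd[OF has_derivative_ident] by blast


lemma hd: "u differentiable (at x) \<Longrightarrow> (u has_derivative frechet_derivative u (at x)) (at x)"
  using frechet_derivative_works by blast

lemma pd_add: "u differentiable (at x) \<Longrightarrow> v differentiable (at x) \<Longrightarrow>
   pd i (\<lambda>y. u y + v y) x = pd i u x + (pd i v x :: real)"
  apply (rule trans[OF pd_eq[OF has_derivative_add[OF hd hd]]])
  by (auto simp: pd_def)

lemma pd_diff: "u differentiable (at x) \<Longrightarrow> v differentiable (at x) \<Longrightarrow>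
   pd i (\<lambda>y. u y - v y) x = pd i u x - (pd i v x :: real)"
  apply (rule trans[OF pd_eq[OF has_derivative_diff[OF hd hd]]])
  by (auto simp: pd_def)

lemma pd_mult: "u differentiable (at x) \<Longrightarrow> v differentiable (at x) \<Longrightarrow>
   pd i (\<lambda>y. u y * v y) x = pd i u x * v x + u x * (pd i v x :: real)"
  apply (rule trans[OF pd_eq[OF has_derivative_mult[OF hd hd]]])
  by (auto simp: pd_def)

lemma pd_minus: "u differentiable (at x) \<Longrightarrow>
   pd i (\<lambda>y. - u y) x = - (pd i u x :: real)"
  apply (rule trans[OF pd_eq[OF has_derivative_minus[OF hd]]])
  by (auto simp: pd_def)

lemma pd_exp: "u differentiable (at x) \<Longrightarrow>
   pd i (\<lambda>y. exp (u y)) x = exp (u x) * (pd i u x :: real)"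
  apply (rule trans[OF pd_eq[OF has_derivative_exp[OF hd]]])
  by (auto simp: pd_def)

lemma pd_const: "pd i (\<lambda>y. c::real) x = 0"
  by (rule trans[OF pd_eq[OF has_derivative_const]]) simp

lemma pd_fst: "pd i (\<lambda>y. fst y) x = fst (evec i)"
  by (rule trans[OF pd_eq[OF has_derivative_fst[OF has_derivative_ident]]]) simp
lemma pd_snd: "pd i (\<lambda>y. snd y) x = snd (evec i)"
  by (rule trans[OF pd_eq[OF has_derivative_snd[OF has_derivative_ident]]]) simp

lemma grad0:
  fixes \<phi> :: "real\<times>real \<Rightarrow> real"
  assumes d: "\<And>x. \<phi> differentiable (at x)" and p1: "\<And>x. pd 1 \<phi> x = 0" and p2: "\<And>x. pd 2 \<phi> x = 0"
  shows "\<exists>C. \<forall>x. \<phi> x = C"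
proof -
  have "(\<phi> has_derivative (\<lambda>h. 0)) (at x within UNIV)" for x
  proof -
    have H: "(\<phi> has_derivative frechet_derivative \<phi> (at x)) (at x)" using hd[OF d] .
    then have L: "linear (frechet_derivative \<phi> (at x))"
      using has_derivative_linear by blast
    have "frechet_derivative \<phi> (at x) h = 0" for h
    proof -
      have e: "h = fst h *\<^sub>R evec 1 + snd h *\<^sub>R evec 2" by (simp add: evec_def prod_eq_iff)
      have "frechet_derivative \<phi> (at x) h = fst h * frechet_derivative \<phi> (at x) (evec 1)
          + snd h * frechet_derivative \<phi> (at x) (evec 2)"
        by (subst e) (simp add: linear_add[OF L] linear_scale[OF L])
      also have "\<dots> = 0" using p1[of x] p2[of x] by (simp add: pd_def)
      finally show ?thesis .
    qed
    then have "frechet_derivative \<phi> (at x) = (\<lambda>h. 0)" by auto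
    then show ?thesis using H by simp
  qed
  then show ?thesis using has_derivative_zero_constant[of UNIV \<phi>] by auto
qed


lemma GA: "GammaA a b c d e f 1 1 1 = a" "GammaA a b c d e f 1 1 2 = b"
  "GammaA a b c d e f 1 2 1 = c" "GammaA a b c d e f 2 1 1 = c"
  "GammaA a b c d e f 1 2 2 = d" "GammaA a b c d e f 2 1 2 = d"
  "GammaA a b c d e f 2 2 1 = e" "GammaA a b c d e f 2 2 2 = f"
  by (simp_all add: GammaA_def)
lemmas GA' = GA[unfolded One_nat_def]
lemma sum_idx: "(\<Sum>m\<in>idx. F m) = F 1 + (F 2 :: real)" by (simp add: idx_def)
lemma Lmod_vals: "Lmod a1 a2 H 1 1 1 = H 1 1 1 + 2*a1" "Lmod a1 a2 H 1 1 2 = H 1 1 2"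
  "Lmod a1 a2 H 1 2 1 = H 1 2 1 + a2" "Lmod a1 a2 H 2 1 1 = H 2 1 1 + a2"
  "Lmod a1 a2 H 1 2 2 = H 1 2 2 + a1" "Lmod a1 a2 H 2 1 2 = H 2 1 2 + a1"
  "Lmod a1 a2 H 2 2 1 = H 2 2 1" "Lmod a1 a2 H 2 2 2 = H 2 2 2 + 2*a2"
  by (simp_all add: Lmod_def lincoef_def kdelta_def idx_def)
lemma curvA: "curv (GammaA a b c d e f) 1 2 1 1 = d*c - b*e"
  "curv (GammaA a b c d e f) 1 2 1 2 = c*b - a*d + d*d - b*f"
  "curv (GammaA a b c d e f) 1 2 2 1 = e*a - c*c + f*c - d*e"
  "curv (GammaA a b c d e f) 1 2 2 2 = e*b - c*d"
  unfolding curv_def sum_idx GA by (simp_all add: algebra_simps)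
lemma ricci_flat: "flat G \<Longrightarrow> i \<in> idx \<Longrightarrow> j \<in> idx \<Longrightarrow> ricci_s G i j = 0"
  unfolding flat_def ricci_s_def ricci_def by simp

lemma Qsp_eq: "Qsp G = {f. smooth2 f \<and> (\<forall>x.
   pd 1 (pd 1 f) x - (G 1 1 1 * pd 1 f x + G 1 1 2 * pd 2 f x) + f x * ricci_s G 1 1 = 0 \<and>
   pd 1 (pd 2 f) x - (G 1 2 1 * pd 1 f x + G 1 2 2 * pd 2 f x) + f x * ricci_s G 1 2 = 0 \<and>
   pd 2 (pd 1 f) x - (G 2 1 1 * pd 1 f x + G 2 1 2 * pd 2 f x) + f x * ricci_s G 2 1 = 0 \<and>
   pd 2 (pd 2 f) x - (G 2 2 1 * pd 1 f x + G 2 2 2 * pd 2 f x) + f x * ricci_s G 2 2 = 0)}"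
  unfolding Qsp_def idx_def by auto

lemma smooth_d:
  assumes "smooth2 f" shows "\<And>x. f differentiable (at x)" "\<And>x. pd 1 f differentiable (at x)"
     "\<And>x. pd 2 f differentiable (at x)"
proof -
  have "iter_pd [] f differentiable_on UNIV" "iter_pd [1] f differentiable_on UNIV"
       "iter_pd [2] f differentiable_on UNIV"
    using assms unfolding smooth2_def idx_def by auto
  then show "\<And>x. f differentiable (at x)" "\<And>x. pd 1 f differentiable (at x)"
     "\<And>x. pd 2 f differentiable (at x)"
    by (auto simp: iter_pd_def differentiable_on_eq_differentiable_at)
qed

lemma smooth_closed:
  assumes "\<And>u x. u \<in> S \<Longrightarrow> u differentiable (at x)"
    and "\<And>u. u \<in> S \<Longrightarrow> pd 1 u \<in> S" "\<And>u. u \<in> S \<Longrightarrow> pd 2 u \<in> S" and "f \<in> S"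
  shows "smooth2 f"
proof -
  have "set is \<subseteq> idx \<Longrightarrow> iter_pd is f \<in> S" for "is"
  proof (induction "is")
    case Nil then show ?case using assms(4) by (simp add: iter_pd_def)
  next
    case (Cons j js)
    then have "j = 1 \<or> j = 2" "iter_pd js f \<in> S" by (auto simp: idx_def)
    then show ?case using assms(2,3) by (auto simp: iter_pd_def)
  qed
  then show ?thesis unfolding smooth2_def
    using assms(1) by (simp add: differentiable_at_imp_differentiable_on)
qed

lemmas dints = differentiable_add differentiable_mult differentiable_const dexp differentiable_minus differentiable_diff dfst dsnd

lemmas pdsimps = pd_minus pd_add pd_diff pd_mult pd_exp pd_const pd_fst pd_snd


lemma solve1: "u * exp (- v) = C \<Longrightarrow> u = C * exp (v::real)"
  by (auto simp: exp_minus field_simps)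
lemma solve2: "u * exp v = C \<Longrightarrow> u = C * exp (- v::real)"
  by (auto simp: exp_minus field_simps)

lemma QA:
  assumes r: "\<And>i j. i \<in> idx \<Longrightarrow> j \<in> idx \<Longrightarrow> ricci_s (GammaA (-1) 0 0 0 0 0) i j = 0"
  shows "Qsp (GammaA (-1) 0 0 0 0 0) = span3 (\<lambda>(x1, x2). exp (- x1)) (\<lambda>_. 1) (\<lambda>(x1, x2). x2)"
proof -
  let ?G = "GammaA (-1) 0 0 0 0 0"
  have r11: "ricci_s ?G 1 1 = 0" "ricci_s ?G 1 2 = 0" "ricci_s ?G 2 1 = 0" "ricci_s ?G 2 2 = 0"
    using r by (auto simp: idx_def)
  let ?S = "{u :: real\<times>real\<Rightarrow>real. \<exists>a b c. u = (\<lambda>x. a * exp (- fst x) + b * 1 + c * snd x)}"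
  have sp: "span3 (\<lambda>(x1, x2). exp (- x1)) (\<lambda>_. 1) (\<lambda>(x1, x2). x2) = ?S"
    unfolding span3_def by (simp only: case_prod_beta')
  have Q: "Qsp ?G = {f. smooth2 f \<and> (\<forall>x. pd 1 (pd 1 f) x = - pd 1 f x \<and> pd 1 (pd 2 f) x = 0 \<and> pd 2 (pd 1 f) x = 0 \<and> pd 2 (pd 2 f) x = 0)}"
    unfolding Qsp_eq GA r11 by (simp add: add_eq_0_iff2)
  have dS: "u differentiable (at x)" if "u \<in> ?S" for u x using that by (elim CollectE exE, hypsubst, intro dints)
  have p1: "pd 1 (\<lambda>x. a * exp (- fst x) + b * 1 + c * snd x) = (\<lambda>x. (-a) * exp (- fst x) + 0 * 1 + 0 * snd x)" for a b c
    by (rule ext) (simp add: pdsimps evec_def algebra_simps)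
  have p2: "pd 2 (\<lambda>x. a * exp (- fst x) + b * 1 + c * snd x) = (\<lambda>x. 0 * exp (- fst x) + c * 1 + 0 * snd x)" for a b c
    by (rule ext) (simp add: pdsimps evec_def algebra_simps)
  show ?thesis
  proof (rule set_eqI, rule iffI)
    fix f assume "f \<in> Qsp ?G"
    then have sm: "smooth2 f" and e: "\<And>x. pd 1 (pd 1 f) x = - pd 1 f x" "\<And>x. pd 1 (pd 2 f) x = 0" "\<And>x. pd 2 (pd 1 f) x = 0" "\<And>x. pd 2 (pd 2 f) x = 0" unfolding Q by auto
    note d = smooth_d[OF sm]
    obtain c where c: "\<And>x. pd 2 f x = c" using grad0[OF d(3)] e by force
    have "\<exists>C. \<forall>x. pd 1 f x * exp (fst x) = C"
      by (rule grad0) (insert d e, auto simp: pdsimps evec_def algebra_simps)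
    then obtain A where A: "\<And>x. pd 1 f x * exp (fst x) = A" by auto
    have A': "pd 1 f x = A * exp (- fst x)" for x using A[of x] by (simp add: exp_minus field_simps)
    have "\<exists>C. \<forall>x. f x + A * exp (- fst x) - c * snd x = C"
      by (rule grad0) (insert d A' c, auto simp: pdsimps evec_def algebra_simps)
    then obtain B where B: "\<And>x. f x + A * exp (- fst x) - c * snd x = B" by auto

    have "f = (\<lambda>x. (-A) * exp (- fst x) + B * 1 + c * snd x)"
      using B by (auto simp: algebra_simps fun_eq_iff)
    then show "f \<in> span3 (\<lambda>(x1, x2). exp (- x1)) (\<lambda>_. 1) (\<lambda>(x1, x2). x2)" unfolding sp by blast
  next
    fix f assume "f \<in> span3 (\<lambda>(x1, x2). exp (- x1)) (\<lambda>_. 1) (\<lambda>(x1, x2). x2)"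
    then have f: "f \<in> ?S" unfolding sp .
    have "smooth2 f"
    proof (rule smooth_closed[OF dS _ _ f])
      fix u :: "real\<times>real\<Rightarrow>real" assume "u \<in> ?S"
      then obtain a b c where u: "u = (\<lambda>x. a * exp (- fst x) + b * 1 + c * snd x)" by auto
      show "pd 1 u \<in> ?S" unfolding u p1 by blast
      show "pd 2 u \<in> ?S" unfolding u p2 by blast
    qed
    moreover have "pd 1 (pd 1 f) x = - pd 1 f x \<and> pd 1 (pd 2 f) x = 0 \<and> pd 2 (pd 1 f) x = 0 \<and> pd 2 (pd 2 f) x = 0" for x
    proof -
      obtain a b c where u: "f = (\<lambda>x. a * exp (- fst x) + b * 1 + c * snd x)" using f by auto
      show ?thesis unfolding u p1 p2 by (simp add: algebra_simps)
    qed
    ultimately show "f \<in> Qsp ?G" unfolding Q by auto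
  qed
qed

lemma QB:
  assumes r: "\<And>i j. i \<in> idx \<Longrightarrow> j \<in> idx \<Longrightarrow> ricci_s (GammaA 1 0 0 1 0 1) i j = 0"
  shows "Qsp (GammaA 1 0 0 1 0 1) = span3 (\<lambda>(x1, x2). exp x1) (\<lambda>_. 1) (\<lambda>(x1, x2). exp (x2 + x1))"
proof -
  let ?G = "GammaA 1 0 0 1 0 1"
  have r11: "ricci_s ?G 1 1 = 0" "ricci_s ?G 1 2 = 0" "ricci_s ?G 2 1 = 0" "ricci_s ?G 2 2 = 0"
    using r by (auto simp: idx_def)
  let ?S = "{u :: real\<times>real\<Rightarrow>real. \<exists>a b c. u = (\<lambda>x. a * exp (fst x) + b * 1 + c * exp (snd x + fst x))}"
  have sp: "span3 (\<lambda>(x1, x2). exp x1) (\<lambda>_. 1) (\<lambda>(x1, x2). exp (x2 + x1)) = ?S"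
    unfolding span3_def by (simp only: case_prod_beta')
  have Q: "Qsp ?G = {f. smooth2 f \<and> (\<forall>x. pd 1 (pd 1 f) x = pd 1 f x \<and> pd 1 (pd 2 f) x = pd 2 f x \<and> pd 2 (pd 1 f) x = pd 2 f x \<and> pd 2 (pd 2 f) x = pd 2 f x)}"
    unfolding Qsp_eq GA r11 by (simp add: add_eq_0_iff2)
  have dS: "u differentiable (at x)" if "u \<in> ?S" for u x using that by (elim CollectE exE, hypsubst, intro dints)
  have p1: "pd 1 (\<lambda>x. a * exp (fst x) + b * 1 + c * exp (snd x + fst x)) = (\<lambda>x. a * exp (fst x) + 0 * 1 + c * exp (snd x + fst x))" for a b c
    by (rule ext) (simp add: pdsimps evec_def algebra_simps)
  have p2: "pd 2 (\<lambda>x. a * exp (fst x) + b * 1 + c * exp (snd x + fst x)) = (\<lambda>x. 0 * exp (fst x) + 0 * 1 + c * exp (snd x + fst x))" for a b c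
    by (rule ext) (simp add: pdsimps evec_def algebra_simps)
  show ?thesis
  proof (rule set_eqI, rule iffI)
    fix f assume "f \<in> Qsp ?G"
    then have sm: "smooth2 f" and e: "\<And>x. pd 1 (pd 1 f) x = pd 1 f x" "\<And>x. pd 1 (pd 2 f) x = pd 2 f x" "\<And>x. pd 2 (pd 1 f) x = pd 2 f x" "\<And>x. pd 2 (pd 2 f) x = pd 2 f x" unfolding Q by auto
    note d = smooth_d[OF sm]
    have "\<exists>C. \<forall>x. pd 2 f x * exp (- (snd x + fst x)) = C"
      by (rule grad0) (insert d e, auto simp: pdsimps evec_def algebra_simps)
    then obtain c where c: "\<And>x. pd 2 f x * exp (- (snd x + fst x)) = c" by auto
    have c': "pd 2 f x = c * exp (snd x + fst x)" for x using solve1[OF c[of x]] .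
    have "\<exists>C. \<forall>x. (pd 1 f x - pd 2 f x) * exp (- fst x) = C"
      by (rule grad0) (insert d e, auto simp: pdsimps evec_def algebra_simps)
    then obtain A where A: "\<And>x. (pd 1 f x - pd 2 f x) * exp (- fst x) = A" by auto
    have A': "pd 1 f x = A * exp (fst x) + c * exp (snd x + fst x)" for x using A[of x] c'[of x] by (simp add: exp_minus field_simps)
    have "\<exists>C. \<forall>x. f x - A * exp (fst x) - c * exp (snd x + fst x) = C"
      by (rule grad0) (insert d A' c', auto simp: pdsimps evec_def algebra_simps)
    then obtain B where B: "\<And>x. f x - A * exp (fst x) - c * exp (snd x + fst x) = B" by auto

    have "f = (\<lambda>x. A * exp (fst x) + B * 1 + c * exp (snd x + fst x))"
      using B by (auto simp: algebra_simps fun_eq_iff)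
    then show "f \<in> span3 (\<lambda>(x1, x2). exp x1) (\<lambda>_. 1) (\<lambda>(x1, x2). exp (x2 + x1))" unfolding sp by blast
  next
    fix f assume "f \<in> span3 (\<lambda>(x1, x2). exp x1) (\<lambda>_. 1) (\<lambda>(x1, x2). exp (x2 + x1))"
    then have f: "f \<in> ?S" unfolding sp .
    have "smooth2 f"
    proof (rule smooth_closed[OF dS _ _ f])
      fix u :: "real\<times>real\<Rightarrow>real" assume "u \<in> ?S"
      then obtain a b c where u: "u = (\<lambda>x. a * exp (fst x) + b * 1 + c * exp (snd x + fst x))" by auto
      show "pd 1 u \<in> ?S" unfolding u p1 by blast
      show "pd 2 u \<in> ?S" unfolding u p2 by blast
    qed
    moreover have "pd 1 (pd 1 f) x = pd 1 f x \<and> pd 1 (pd 2 f) x = pd 2 f x \<and> pd 2 (pd 1 f) x = pd 2 f x \<and> pd 2 (pd 2 f) x = pd 2 f x" for x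
    proof -
      obtain a b c where u: "f = (\<lambda>x. a * exp (fst x) + b * 1 + c * exp (snd x + fst x))" using f by auto
      show ?thesis unfolding u p1 p2 by (simp add: algebra_simps)
    qed
    ultimately show "f \<in> Qsp ?G" unfolding Q by auto
  qed
qed

lemma QC:
  assumes r: "\<And>i j. i \<in> idx \<Longrightarrow> j \<in> idx \<Longrightarrow> ricci_s (GammaA (-1) 0 (-1) 0 0 (-1)) i j = 0"
  shows "Qsp (GammaA (-1) 0 (-1) 0 0 (-1)) = span3 (\<lambda>(x1, x2). exp (- x2)) (\<lambda>(x1, x2). exp (- x1 - x2)) (\<lambda>_. 1)"
proof -
  let ?G = "GammaA (-1) 0 (-1) 0 0 (-1)"
  have r11: "ricci_s ?G 1 1 = 0" "ricci_s ?G 1 2 = 0" "ricci_s ?G 2 1 = 0" "ricci_s ?G 2 2 = 0"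
    using r by (auto simp: idx_def)
  let ?S = "{u :: real\<times>real\<Rightarrow>real. \<exists>a b c. u = (\<lambda>x. a * exp (- snd x) + b * exp (- fst x - snd x) + c * 1)}"
  have sp: "span3 (\<lambda>(x1, x2). exp (- x2)) (\<lambda>(x1, x2). exp (- x1 - x2)) (\<lambda>_. 1) = ?S"
    unfolding span3_def by (simp only: case_prod_beta')
  have Q: "Qsp ?G = {f. smooth2 f \<and> (\<forall>x. pd 1 (pd 1 f) x = - pd 1 f x \<and> pd 1 (pd 2 f) x = - pd 1 f x \<and> pd 2 (pd 1 f) x = - pd 1 f x \<and> pd 2 (pd 2 f) x = - pd 2 f x)}"
    unfolding Qsp_eq GA r11 by (simp add: add_eq_0_iff2)
  have dS: "u differentiable (at x)" if "u \<in> ?S" for u x using that by (elim CollectE exE, hypsubst, intro dints)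
  have p1: "pd 1 (\<lambda>x. a * exp (- snd x) + b * exp (- fst x - snd x) + c * 1) = (\<lambda>x. 0 * exp (- snd x) + (-b) * exp (- fst x - snd x) + 0 * 1)" for a b c
    by (rule ext) (simp add: pdsimps evec_def algebra_simps)
  have p2: "pd 2 (\<lambda>x. a * exp (- snd x) + b * exp (- fst x - snd x) + c * 1) = (\<lambda>x. (-a) * exp (- snd x) + (-b) * exp (- fst x - snd x) + 0 * 1)" for a b c
    by (rule ext) (simp add: pdsimps evec_def algebra_simps)
  show ?thesis
  proof (rule set_eqI, rule iffI)
    fix f assume "f \<in> Qsp ?G"
    then have sm: "smooth2 f" and e: "\<And>x. pd 1 (pd 1 f) x = - pd 1 f x" "\<And>x. pd 1 (pd 2 f) x = - pd 1 f x" "\<And>x. pd 2 (pd 1 f) x = - pd 1 f x" "\<And>x. pd 2 (pd 2 f) x = - pd 2 f x" unfolding Q by auto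
    note d = smooth_d[OF sm]
    have "\<exists>C. \<forall>x. pd 1 f x * exp (fst x + snd x) = C"
      by (rule grad0) (insert d e, auto simp: pdsimps evec_def algebra_simps)
    then obtain K where K: "\<And>x. pd 1 f x * exp (fst x + snd x) = K" by auto
    have K': "pd 1 f x = K * exp (- fst x - snd x)" for x using solve2[OF K[of x]] by simp
    have "\<exists>C. \<forall>x. (pd 2 f x - pd 1 f x) * exp (snd x) = C"
      by (rule grad0) (insert d e, auto simp: pdsimps evec_def algebra_simps)
    then obtain M where M: "\<And>x. (pd 2 f x - pd 1 f x) * exp (snd x) = M" by auto
    have M': "pd 2 f x = M * exp (- snd x) + K * exp (- fst x - snd x)" for x using M[of x] K'[of x] by (simp add: exp_minus exp_diff field_simps)
    have "\<exists>C. \<forall>x. f x + K * exp (- fst x - snd x) + M * exp (- snd x) = C"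
      by (rule grad0) (insert d K' M', auto simp: pdsimps evec_def algebra_simps)
    then obtain B where B: "\<And>x. f x + K * exp (- fst x - snd x) + M * exp (- snd x) = B" by auto

    have "f = (\<lambda>x. (-M) * exp (- snd x) + (-K) * exp (- fst x - snd x) + B * 1)"
      using B by (auto simp: algebra_simps fun_eq_iff)
    then show "f \<in> span3 (\<lambda>(x1, x2). exp (- x2)) (\<lambda>(x1, x2). exp (- x1 - x2)) (\<lambda>_. 1)" unfolding sp by blast
  next
    fix f assume "f \<in> span3 (\<lambda>(x1, x2). exp (- x2)) (\<lambda>(x1, x2). exp (- x1 - x2)) (\<lambda>_. 1)"
    then have f: "f \<in> ?S" unfolding sp .
    have "smooth2 f"
    proof (rule smooth_closed[OF dS _ _ f])
      fix u :: "real\<times>real\<Rightarrow>real" assume "u \<in> ?S"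
      then obtain a b c where u: "u = (\<lambda>x. a * exp (- snd x) + b * exp (- fst x - snd x) + c * 1)" by auto
      show "pd 1 u \<in> ?S" unfolding u p1 by blast
      show "pd 2 u \<in> ?S" unfolding u p2 by blast
    qed
    moreover have "pd 1 (pd 1 f) x = - pd 1 f x \<and> pd 1 (pd 2 f) x = - pd 1 f x \<and> pd 2 (pd 1 f) x = - pd 1 f x \<and> pd 2 (pd 2 f) x = - pd 2 f x" for x
    proof -
      obtain a b c where u: "f = (\<lambda>x. a * exp (- snd x) + b * exp (- fst x - snd x) + c * 1)" using f by auto
      show ?thesis unfolding u p1 p2 by (simp add: algebra_simps)
    qed
    ultimately show "f \<in> Qsp ?G" unfolding Q by auto
  qed
qed

lemma QD:
  assumes r: "\<And>i j. i \<in> idx \<Longrightarrow> j \<in> idx \<Longrightarrow> ricci_s (GammaA 0 0 (-1) 0 0 (-1)) i j = 0"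
  shows "Qsp (GammaA 0 0 (-1) 0 0 (-1)) = span3 (\<lambda>(x1, x2). exp (- x2)) (\<lambda>(x1, x2). x1 * exp (- x2)) (\<lambda>_. 1)"
proof -
  let ?G = "GammaA 0 0 (-1) 0 0 (-1)"
  have r11: "ricci_s ?G 1 1 = 0" "ricci_s ?G 1 2 = 0" "ricci_s ?G 2 1 = 0" "ricci_s ?G 2 2 = 0"
    using r by (auto simp: idx_def)
  let ?S = "{u :: real\<times>real\<Rightarrow>real. \<exists>a b c. u = (\<lambda>x. a * exp (- snd x) + b * (fst x * exp (- snd x)) + c * 1)}"
  have sp: "span3 (\<lambda>(x1, x2). exp (- x2)) (\<lambda>(x1, x2). x1 * exp (- x2)) (\<lambda>_. 1) = ?S"
    unfolding span3_def by (simp only: case_prod_beta')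
  have Q: "Qsp ?G = {f. smooth2 f \<and> (\<forall>x. pd 1 (pd 1 f) x = 0 \<and> pd 1 (pd 2 f) x = - pd 1 f x \<and> pd 2 (pd 1 f) x = - pd 1 f x \<and> pd 2 (pd 2 f) x = - pd 2 f x)}"
    unfolding Qsp_eq GA r11 by (simp add: add_eq_0_iff2)
  have dS: "u differentiable (at x)" if "u \<in> ?S" for u x using that by (elim CollectE exE, hypsubst, intro dints)
  have p1: "pd 1 (\<lambda>x. a * exp (- snd x) + b * (fst x * exp (- snd x)) + c * 1) = (\<lambda>x. b * exp (- snd x) + 0 * (fst x * exp (- snd x)) + 0 * 1)" for a b c
    by (rule ext) (simp add: pdsimps evec_def algebra_simps)
  have p2: "pd 2 (\<lambda>x. a * exp (- snd x) + b * (fst x * exp (- snd x)) + c * 1) = (\<lambda>x. (-a) * exp (- snd x) + (-b) * (fst x * exp (- snd x)) + 0 * 1)" for a b c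
    by (rule ext) (simp add: pdsimps evec_def algebra_simps)
  show ?thesis
  proof (rule set_eqI, rule iffI)
    fix f assume "f \<in> Qsp ?G"
    then have sm: "smooth2 f" and e: "\<And>x. pd 1 (pd 1 f) x = 0" "\<And>x. pd 1 (pd 2 f) x = - pd 1 f x" "\<And>x. pd 2 (pd 1 f) x = - pd 1 f x" "\<And>x. pd 2 (pd 2 f) x = - pd 2 f x" unfolding Q by auto
    note d = smooth_d[OF sm]
    have "\<exists>C. \<forall>x. pd 1 f x * exp (snd x) = C"
      by (rule grad0) (insert d e, auto simp: pdsimps evec_def algebra_simps)
    then obtain K where K: "\<And>x. pd 1 f x * exp (snd x) = K" by auto
    have K': "pd 1 f x = K * exp (- snd x)" for x using K[of x] by (simp add: exp_minus field_simps)
    have "\<exists>C. \<forall>x. pd 2 f x * exp (snd x) + K * fst x = C"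
      by (rule grad0) (insert d e K, auto simp: pdsimps evec_def algebra_simps)
    then obtain M where M: "\<And>x. pd 2 f x * exp (snd x) + K * fst x = M" by auto
    have M': "pd 2 f x = M * exp (- snd x) - K * (fst x * exp (- snd x))" for x using M[of x] by (simp add: exp_minus field_simps)
    have "\<exists>C. \<forall>x. f x - K * (fst x * exp (- snd x)) + M * exp (- snd x) = C"
      by (rule grad0) (insert d K' M', auto simp: pdsimps evec_def algebra_simps)
    then obtain B where B: "\<And>x. f x - K * (fst x * exp (- snd x)) + M * exp (- snd x) = B" by auto

    have "f = (\<lambda>x. (-M) * exp (- snd x) + K * (fst x * exp (- snd x)) + B * 1)"
      using B by (auto simp: algebra_simps fun_eq_iff)
    then show "f \<in> span3 (\<lambda>(x1, x2). exp (- x2)) (\<lambda>(x1, x2). x1 * exp (- x2)) (\<lambda>_. 1)" unfolding sp by blast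
  next
    fix f assume "f \<in> span3 (\<lambda>(x1, x2). exp (- x2)) (\<lambda>(x1, x2). x1 * exp (- x2)) (\<lambda>_. 1)"
    then have f: "f \<in> ?S" unfolding sp .
    have "smooth2 f"
    proof (rule smooth_closed[OF dS _ _ f])
      fix u :: "real\<times>real\<Rightarrow>real" assume "u \<in> ?S"
      then obtain a b c where u: "u = (\<lambda>x. a * exp (- snd x) + b * (fst x * exp (- snd x)) + c * 1)" by auto
      show "pd 1 u \<in> ?S" unfolding u p1 by blast
      show "pd 2 u \<in> ?S" unfolding u p2 by blast
    qed
    moreover have "pd 1 (pd 1 f) x = 0 \<and> pd 1 (pd 2 f) x = - pd 1 f x \<and> pd 2 (pd 1 f) x = - pd 1 f x \<and> pd 2 (pd 2 f) x = - pd 2 f x" for x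
    proof -
      obtain a b c where u: "f = (\<lambda>x. a * exp (- snd x) + b * (fst x * exp (- snd x)) + c * 1)" using f by auto
      show ?thesis unfolding u p1 p2 by (simp add: algebra_simps)
    qed
    ultimately show "f \<in> Qsp ?G" unfolding Q by auto
  qed
qed


definition mat2 :: "real \<Rightarrow> real \<Rightarrow> real \<Rightarrow> real \<Rightarrow> nat \<Rightarrow> nat \<Rightarrow> real" where
  "mat2 p q r s = (\<lambda>a i. if a = 1 then (if i = 1 then p else q) else (if i = 1 then r else s))"

lemma IA: "intertwines (\<lambda>(x1, x2). (x2, - x1)) (GammaA (-1) 0 0 0 0 0) (Gamma0 3)"
  unfolding intertwines_def
  apply (rule exI[of _ "mat2 0 1 (-1) 0"])
  by (simp add: mat2_def Gamma0_def sum_idx idx_def GA GA')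

lemma IB: "intertwines (\<lambda>(x1, x2). (- x1, x1 + x2)) (GammaA 1 0 0 1 0 1) (Gamma0 2)"
  unfolding intertwines_def
  apply (rule exI[of _ "mat2 (-1) 0 1 1"])
  by (simp add: mat2_def Gamma0_def sum_idx idx_def GA GA')

lemma IC: "intertwines (\<lambda>(x1, x2). (x2, - x1 - x2)) (GammaA (-1) 0 (-1) 0 0 (-1)) (Gamma0 2)"
  unfolding intertwines_def
  apply (rule exI[of _ "mat2 0 1 (-1) (-1)"])
  by (simp add: mat2_def Gamma0_def sum_idx idx_def GA GA')

lemma ID: "intertwines (\<lambda>(x1, x2). (- x2, x1)) (GammaA 0 0 (-1) 0 0 (-1)) (Gamma0 1)"
  unfolding intertwines_def
  apply (rule exI[of _ "mat2 0 (-1) 1 0"])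
  by (simp add: mat2_def Gamma0_def sum_idx idx_def GA GA')

theorem theorem3p3:
  fixes a b c d e f :: real and i :: nat
  defines "G \<equiv> GammaA a b c d e f"
  assumes "flat G"
    and "i \<le> 5"
    and "\<exists>a1 a2. G = Lmod a1 a2 (Gamma0 i)"
  shows "G = Gamma0 i
    \<or> (i = 1 \<and> Qsp G = span3 (\<lambda>(x1, x2). exp (- x1)) (\<lambda>_. 1) (\<lambda>(x1, x2). x2)
        \<and> intertwines (\<lambda>(x1, x2). (x2, - x1)) G (Gamma0 3))
    \<or> (i = 2 \<and> Qsp G = span3 (\<lambda>(x1, x2). exp x1) (\<lambda>_. 1) (\<lambda>(x1, x2). exp (x2 + x1))
        \<and> intertwines (\<lambda>(x1, x2). (- x1, x1 + x2)) G (Gamma0 2))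
    \<or> (i = 2 \<and> Qsp G = span3 (\<lambda>(x1, x2). exp (- x2)) (\<lambda>(x1, x2). exp (- x1 - x2)) (\<lambda>_. 1)
        \<and> intertwines (\<lambda>(x1, x2). (x2, - x1 - x2)) G (Gamma0 2))
    \<or> (i = 3 \<and> Qsp G = span3 (\<lambda>(x1, x2). exp (- x2)) (\<lambda>(x1, x2). x1 * exp (- x2)) (\<lambda>_. 1)
        \<and> intertwines (\<lambda>(x1, x2). (- x2, x1)) G (Gamma0 1))"
proof -
  obtain a1 a2 where L: "G = Lmod a1 a2 (Gamma0 i)" using assms(4) by blast
  have h: "G 1 1 1 = Lmod a1 a2 (Gamma0 i) 1 1 1" "G 1 1 2 = Lmod a1 a2 (Gamma0 i) 1 1 2"
    "G 1 2 1 = Lmod a1 a2 (Gamma0 i) 1 2 1" "G 1 2 2 = Lmod a1 a2 (Gamma0 i) 1 2 2"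
    "G 2 2 1 = Lmod a1 a2 (Gamma0 i) 2 2 1" "G 2 2 2 = Lmod a1 a2 (Gamma0 i) 2 2 2"
    by (simp_all only: L)
  then have v: "a = Gamma0 i 1 1 1 + 2*a1" "b = Gamma0 i 1 1 2" "c = Gamma0 i 1 2 1 + a2"
    "d = Gamma0 i 1 2 2 + a1" "e = Gamma0 i 2 2 1" "f = Gamma0 i 2 2 2 + 2*a2"
    unfolding G_def GA Lmod_vals by simp_all
  have "curv G 1 2 1 1 = 0" "curv G 1 2 1 2 = 0" "curv G 1 2 2 1 = 0" "curv G 1 2 2 2 = 0"
    using assms(2) unfolding flat_def idx_def by blast+
  then have fl: "d*c - b*e = 0" "c*b - a*d + d*d - b*f = 0" "e*a - c*c + f*c - d*e = 0" "e*b - c*d = 0"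
    unfolding G_def curvA by simp_all
  have ric: "\<And>i j. i \<in> idx \<Longrightarrow> j \<in> idx \<Longrightarrow> ricci_s G i j = 0"
    using ricci_flat[OF assms(2)] by blast
  have "i = 0 \<or> i = 1 \<or> i = 2 \<or> i = 3 \<or> i = 4 \<or> i = 5" using assms(3) by auto
  then show ?thesis
  proof (elim disjE)
    assume i: "i = 0"
    have g: "Gamma0 i = GammaA 0 0 0 0 0 0" by (simp add: i Gamma0_def)
    note v = v[unfolded g GA]
    have "a1 = 0" "a2 = 0" using fl unfolding v by (simp_all add: algebra_simps)
    then show ?thesis using v unfolding G_def g by simp
  next
    assume i: "i = 1"
    have g: "Gamma0 i = GammaA 1 0 0 1 0 0" by (simp add: i Gamma0_def)
    note v = v[unfolded g GA]
    have "a2 * a2 = 0" "a1 * (1 + a1) = 0" using fl unfolding v by (simp_all add: algebra_simps)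
    then have "a2 = 0" "a1 = 0 \<or> a1 = -1" by auto
    then show ?thesis
    proof (elim disjE)
      assume "a2 = 0" "a1 = 0"
      then show ?thesis using v unfolding G_def g by simp
    next
      assume "a2 = 0" "a1 = -1"
      then have GG: "G = GammaA (-1) 0 0 0 0 0" using v unfolding G_def by simp
      show ?thesis using QA[OF ric[unfolded GG]] IA i unfolding GG by simp
    qed
  next
    assume i: "i = 2"
    have g: "Gamma0 i = GammaA (-1) 0 0 0 0 1" by (simp add: i Gamma0_def)
    note v = v[unfolded g GA]
    have "a1 * a2 = 0" "a1 * (1 - a1) = 0" "a2 * (1 + a2) = 0" using fl unfolding v by (simp_all add: algebra_simps)
    then have "(a1 = 0 \<and> a2 = 0) \<or> (a1 = 1 \<and> a2 = 0) \<or> (a1 = 0 \<and> a2 = -1)" by auto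
    then show ?thesis
    proof (elim disjE conjE)
      assume "a1 = 0" "a2 = 0"
      then show ?thesis using v unfolding G_def g by simp
    next
      assume "a1 = 1" "a2 = 0"
      then have GG: "G = GammaA 1 0 0 1 0 1" using v unfolding G_def by simp
      show ?thesis using QB[OF ric[unfolded GG]] IB i unfolding GG by simp
    next
      assume "a1 = 0" "a2 = -1"
      then have GG: "G = GammaA (-1) 0 (-1) 0 0 (-1)" using v unfolding G_def by simp
      show ?thesis using QC[OF ric[unfolded GG]] IC i unfolding GG by simp
    qed
  next
    assume i: "i = 3"
    have g: "Gamma0 i = GammaA 0 0 0 0 0 1" by (simp add: i Gamma0_def)
    note v = v[unfolded g GA]
    have "a1 * a1 = 0" "a2 * (1 + a2) = 0" using fl unfolding v by (simp_all add: algebra_simps)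
    then have "a1 = 0" "a2 = 0 \<or> a2 = -1" by auto
    then show ?thesis
    proof (elim disjE)
      assume "a1 = 0" "a2 = 0"
      then show ?thesis using v unfolding G_def g by simp
    next
      assume "a1 = 0" "a2 = -1"
      then have GG: "G = GammaA 0 0 (-1) 0 0 (-1)" using v unfolding G_def by simp
      show ?thesis using QD[OF ric[unfolded GG]] ID i unfolding GG by simp
    qed
  next
    assume i: "i = 4"
    have g: "Gamma0 i = GammaA 0 0 0 0 1 0" by (simp add: i Gamma0_def)
    note v = v[unfolded g GA]
    have "a1 * a1 = 0" using fl unfolding v by (simp_all add: algebra_simps)
    then have "a1 = 0" by auto
    then have "a2 * a2 = 0" using fl unfolding v by (simp_all add: algebra_simps)
    then have "a2 = 0" by auto
    then show ?thesis using v \<open>a1 = 0\<close> unfolding G_def g by simp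
  next
    assume i: "i = 5"
    have g: "Gamma0 i = GammaA 1 0 0 1 (-1) 0" by (simp add: i Gamma0_def)
    note v = v[unfolded g GA]
    have "a1 * (1 + a1) = 0" "a2 * a2 = a1" using fl unfolding v by (simp_all add: algebra_simps)
    moreover have "a2 * a2 \<ge> 0" by simp
    ultimately have "a1 = 0" by (auto simp: mult_eq_0_iff) 
    then have "a2 = 0" using \<open>a2 * a2 = a1\<close> by simp
    then show ?thesis using v \<open>a1 = 0\<close> unfolding G_def g by simp
  qed
qed

end
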